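(* Let $f(x)=\frac1n\sum_{i=1}^n f_i(x)$ where each $f_i:\mathbb{R}^d\to\mathbb{R}$ is differentiable and $\mu_i$-strongly convex with $\mu_i>0$, and let $x_\star$ be the minimizer of $f$. Let $p_1,\dots,p_n>0$ with $\sum_i p_i=1$, and define $$\mu_{\rm NS}:=\min_i\frac{\mu_i}{np_i},\qquad \sigma_{\star,\rm NS}^2:=\frac1n\sum_{i=1}^n\frac{1}{np_i}\|\nabla f_i(x_\star)\|^2.$$ Consider SPPM-NS: starting from arbitrary $x_0\in\mathbb{R}^d$, at each step $k$ choose $i_k=i$ with probability $p_i$ (independently of the past) and set $x_{k+1}=\operatorname{prox}_{\frac{\gamma}{np_{i_k}}f_{i_k}}(x_k)$. Then for any $\gamma>0$ and $k\ge 0$, $$\mathbb{E}\|x_k-x_\star\|^2\le\left(\frac{1}{1+\gamma\mu_{\rm NS}}\right)^{2k}\|x_0-x_\star\|^2+\frac{\gamma\sigma_{\star,\rm NS}^2}{\gamma\mu_{\rm NS}^2+2\mu_{\rm NS}}.$$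
   Context: $\operatorname{prox}_{\gamma\phi}(y):=\arg\min_{x\in\mathbb{R}^d}\{\phi(x)+\frac{1}{2\gamma}\|x-y\|^2\}$. $\mu$-strong convexity of $g$: $g(y)+\langle\nabla g(y),x-y\rangle+\frac{\mu}{2}\|x-y\|^2\le g(x)$ for all $x,y$. *)

theory Defs
  imports "HOL-Analysis.Analysis"
begin

text \<open>Proximal operator: prox_{gamma phi}(y) = argmin_x { phi x + 1/(2 gamma) ||x - y||^2 }
  (the unique minimizer, when it exists).\<close>
definition prox :: "real \<Rightarrow> ('a::real_normed_vector \<Rightarrow> real) \<Rightarrow> 'a \<Rightarrow> 'a" where
  "prox \<gamma> \<phi> y = (THE x. \<forall>z. \<phi> x + (1 / (2*\<gamma>)) * (norm (x - y))^2
                              \<le> \<phi> z + (1 / (2*\<gamma>)) * (norm (z - y))^2)"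

definition strongly_convex_grad :: "real \<Rightarrow> ('a::real_inner \<Rightarrow> real) \<Rightarrow> ('a \<Rightarrow> 'a) \<Rightarrow> bool" where
  "strongly_convex_grad \<mu> g grad_g \<longleftrightarrow>
     (\<forall>x y. g y + inner (grad_g y) (x - y) + (\<mu>/2) * (norm (x - y))^2 \<le> g x)"

definition sppm_ns_iter :: "real \<Rightarrow> nat \<Rightarrow> (nat \<Rightarrow> real) \<Rightarrow> (nat \<Rightarrow> 'a::real_normed_vector \<Rightarrow> real)
    \<Rightarrow> 'a \<Rightarrow> nat list \<Rightarrow> 'a" where
  "sppm_ns_iter \<gamma> n p f x0 is = foldl (\<lambda>x i. prox (\<gamma> / (real n * p i)) (f i) x) x0 is"

text \<open>E ||x_k - x_star||^2 where i_0,...,i_{k-1} are i.i.d. with P(i_j = i) = p i, i < n: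
  the expectation written as the finite sum over all index sequences of length k.\<close>
definition sppm_ns_expected_sqdist :: "real \<Rightarrow> nat \<Rightarrow> (nat \<Rightarrow> real) \<Rightarrow> (nat \<Rightarrow> 'a::real_normed_vector \<Rightarrow> real)
    \<Rightarrow> 'a \<Rightarrow> 'a \<Rightarrow> nat \<Rightarrow> real" where
  "sppm_ns_expected_sqdist \<gamma> n p f x0 xs k =
     (\<Sum>is \<in> {is. length is = k \<and> set is \<subseteq> {..<n}}.
        prod_list (map p is) * (norm (sppm_ns_iter \<gamma> n p f x0 is - xs))^2)"

end

theory Submission imports Defs begin

lemma sc_mono:
  assumes "strongly_convex_grad m g G"
  shows "inner (G a - G b) (a - b) \<ge> m * (norm (a - b))^2"
proof -
  have 1: "g b + inner (G b) (a - b) + (m/2) * (norm (a - b))^2 \<le> g a"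
    using assms unfolding strongly_convex_grad_def by blast
  have 2: "g a + inner (G a) (b - a) + (m/2) * (norm (b - a))^2 \<le> g b"
    using assms unfolding strongly_convex_grad_def by blast
  have "norm (b - a) = norm (a - b)" by (rule norm_minus_commute)
  moreover have "inner (G a) (b - a) = - inner (G a) (a - b)"
    by (metis inner_minus_right minus_diff_eq)
  ultimately show ?thesis using 1 2 by (simp add: inner_diff_left algebra_simps)
qed

lemma prox_min_char:
  fixes g :: "'a::euclidean_space \<Rightarrow> real"
  assumes deriv: "\<And>x. (g has_derivative (\<lambda>h. inner (G x) h)) (at x)"
    and t: "t > 0"
    and min: "\<forall>z. g x + (1 / (2*t)) * (norm (x - y))^2 \<le> g z + (1 / (2*t)) * (norm (z - y))^2"
  shows "G x = (1/t) *\<^sub>R (y - x)"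
proof -
  let ?phi = "\<lambda>z. g z + (1 / (2*t)) * inner (z - y) (z - y)"
  have d: "(?phi has_derivative (\<lambda>h. inner (G x) h + (1 / (2*t)) * (inner h (x - y) + inner (x - y) h))) (at x)"
    using t by (auto intro!: derivative_eq_intros deriv simp: field_simps)
  have "(\<lambda>h. inner (G x) h + (1 / (2*t)) * (inner h (x - y) + inner (x - y) h)) = (\<lambda>h. 0)"
    apply (rule has_derivative_local_min[OF d])
    using min by (simp add: power2_norm_eq_inner always_eventually)
  then have "\<And>h. inner (G x) h + (1 / (2*t)) * (inner h (x - y) + inner (x - y) h) = 0"
    by metis
  then have "\<And>h. inner (G x + (1/t) *\<^sub>R (x - y)) h = 0"
    by (simp add: inner_add_left inner_commute algebra_simps)
  then have "G x + (1/t) *\<^sub>R (x - y) = 0"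
    by (metis inner_eq_zero_iff)
  then show ?thesis by (simp add: algebra_simps eq_neg_iff_add_eq_0 scaleR_diff_right)
qed

lemma prox_exists:
  fixes g :: "'a::euclidean_space \<Rightarrow> real"
  assumes deriv: "\<And>x. (g has_derivative (\<lambda>h. inner (G x) h)) (at x)"
    and sc: "strongly_convex_grad m g G" and m: "m > 0"
    and t: "t > 0"
  shows "\<exists>x. \<forall>z. g x + (1 / (2*t)) * (norm (x - y))^2 \<le> g z + (1 / (2*t)) * (norm (z - y))^2"
proof -
  define phi where "phi = (\<lambda>z. g z + (1 / (2*t)) * (norm (z - y))^2)"
  define R where "R = 2 * t * norm (G y) + 1"
  have cont: "continuous_on (cball y R) phi"
    unfolding phi_def
    by (intro continuous_at_imp_continuous_on ballI continuous_intros has_derivative_continuous[OF deriv])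
  have "y \<in> cball y R" using t by (simp add: R_def)
  then obtain x0 where x0: "x0 \<in> cball y R" "\<forall>z\<in>cball y R. phi x0 \<le> phi z"
    using continuous_attains_inf[OF compact_cball _ cont] by blast
  have far: "phi z > phi y" if "z \<notin> cball y R" for z
  proof -
    define r where "r = norm (z - y)"
    have rR: "r > R" using that by (simp add: r_def dist_norm norm_minus_commute)
    have sc1: "g y + inner (G y) (z - y) + (m/2) * r^2 \<le> g z"
      using sc unfolding strongly_convex_grad_def r_def by blast
    have "inner (G y) (z - y) \<ge> - (norm (G y) * r)"
      using norm_cauchy_schwarz[of "G y" "z - y"] Cauchy_Schwarz_ineq2[of "G y" "z - y"] unfolding r_def
      by (smt (verit) abs_le_iff)
    moreover have "(m/2) * r^2 \<ge> 0" using m by simp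
    moreover have "r^2 / (2*t) > norm (G y) * r"
    proof -
      have "r > 2 * t * norm (G y)" using rR R_def by simp
      moreover have "r > 0" using rR R_def t by (smt (verit) mult_nonneg_nonneg norm_ge_zero)
      ultimately have "r * r > (2 * t * norm (G y)) * r" by (simp add: mult_strict_right_mono)
      then show ?thesis using t by (simp add: field_simps power2_eq_square)
    qed
    ultimately have "g z + r^2 / (2*t) > g y" using sc1 by linarith
    then show ?thesis by (simp add: phi_def r_def)
  qed
  have "\<forall>z. phi x0 \<le> phi z"
  proof
    fix z show "phi x0 \<le> phi z"
    proof (cases "z \<in> cball y R")
      case True then show ?thesis using x0 by blast
    next
      case False then show ?thesis using far[OF False] x0 \<open>y \<in> cball y R\<close> by fastforce
    qed
  qed
  then show ?thesis unfolding phi_def by blast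
qed

lemma prox_grad:
  fixes g :: "'a::euclidean_space \<Rightarrow> real"
  assumes deriv: "\<And>x. (g has_derivative (\<lambda>h. inner (G x) h)) (at x)"
    and sc: "strongly_convex_grad m g G" and m: "m > 0"
    and t: "t > 0"
  shows "G (prox t g y) = (1/t) *\<^sub>R (y - prox t g y)"
proof -
  let ?P = "\<lambda>x. \<forall>z. g x + (1 / (2*t)) * (norm (x - y))^2 \<le> g z + (1 / (2*t)) * (norm (z - y))^2"
  obtain x where x: "?P x" using prox_exists[OF deriv sc m t] by blast
  have uniq: "x' = x" if "?P x'" for x'
  proof -
    have e1: "G x = (1/t) *\<^sub>R (y - x)" by (rule prox_min_char[OF deriv t x])
    have e2: "G x' = (1/t) *\<^sub>R (y - x')" by (rule prox_min_char[OF deriv t that])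
    have "inner (G x' - G x) (x' - x) \<ge> m * (norm (x' - x))^2" by (rule sc_mono[OF sc])
    moreover have "G x' - G x = - ((1/t) *\<^sub>R (x' - x))" using e1 e2 by (simp add: algebra_simps)
    ultimately have "- (1/t) * (norm (x' - x))^2 \<ge> m * (norm (x' - x))^2"
      by (simp add: power2_norm_eq_inner)
    then have "(m + 1/t) * (norm (x' - x))^2 \<le> 0" by (simp add: algebra_simps)
    moreover have "m + 1/t > 0"
    proof -
      have "1/t > 0" using t by simp
      then show ?thesis using m by linarith
    qed
    ultimately have "(norm (x' - x))^2 \<le> 0"
      using mult_le_cancel_left_pos[of "m + 1/t" "(norm (x' - x))^2" 0] by simp
    then show ?thesis by simp
  qed
  have "?P (prox t g y)" unfolding prox_def
    by (rule theI[of ?P x, OF x uniq])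
  then show ?thesis by (rule prox_min_char[OF deriv t])
qed

lemma prox_contract:
  fixes g :: "'a::euclidean_space \<Rightarrow> real"
  assumes deriv: "\<And>x. (g has_derivative (\<lambda>h. inner (G x) h)) (at x)"
    and sc: "strongly_convex_grad m g G" and m: "m > 0"
    and t: "t > 0"
  shows "(norm (prox t g y - xs))^2 \<le> (norm (y - xs - t *\<^sub>R G xs))^2 / (1 + t*m)^2"
proof -
  define x where "x = prox t g y"
  define d where "d = x - xs"
  define w where "w = y - xs - t *\<^sub>R G xs"
  have e: "G x = (1/t) *\<^sub>R (y - x)" unfolding x_def by (rule prox_grad[OF deriv sc m t])
  have "inner (G x - G xs) (x - xs) \<ge> m * (norm (x - xs))^2" by (rule sc_mono[OF sc])
  moreover have "G x - G xs = (1/t) *\<^sub>R (w - d)" using e t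
    by (simp add: w_def d_def algebra_simps)
  ultimately have "(1/t) * inner (w - d) d \<ge> m * (norm d)^2" by (simp add: d_def)
  then have "inner (w - d) d \<ge> t * m * (norm d)^2" using t by (simp add: field_simps)
  then have "inner w d \<ge> (1 + t*m) * (norm d)^2"
    by (simp add: inner_diff_left power2_norm_eq_inner algebra_simps)
  moreover have "inner w d \<le> norm w * norm d" by (rule norm_cauchy_schwarz)
  ultimately have A: "(1 + t*m) * (norm d)^2 \<le> norm w * norm d" by linarith
  have pos: "1 + t*m > 0"
  proof -
    have "t*m > 0" using t m by simp
    then show ?thesis by linarith
  qed
  have "(1 + t*m) * norm d \<le> norm w"
  proof (cases "norm d = 0")
    case True then show ?thesis by simp
  next
    case False
    then have "norm d > 0" by simp
    with A show ?thesis by (simp add: power2_eq_square mult.assoc[symmetric] mult_le_cancel_right)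
  qed
  then have "norm d \<le> norm w / (1 + t*m)" using pos by (simp add: field_simps)
  then have "(norm d)^2 \<le> (norm w / (1 + t*m))^2" by (intro power_mono) auto
  then show ?thesis by (simp add: d_def w_def x_def power_divide)
qed

lemma sum_lists_Suc:
  assumes "finite A"
  shows "(\<Sum>ls\<in>{ls. length ls = Suc k \<and> set ls \<subseteq> A}. h ls)
       = (\<Sum>js\<in>{js. length js = k \<and> set js \<subseteq> A}. \<Sum>i\<in>A. h (js @ [i]))"
proof -
  let ?L = "{js. length js = k \<and> set js \<subseteq> A}"
  have eq: "{ls. length ls = Suc k \<and> set ls \<subseteq> A} = (\<lambda>(js,i). js @ [i]) ` (?L \<times> A)"
  proof (rule set_eqI, rule iffI)
    fix ls assume "ls \<in> {ls. length ls = Suc k \<and> set ls \<subseteq> A}"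
    then obtain ys y where "ls = ys @ [y]" "length ys = k" "set ls \<subseteq> A"
      by (auto simp: length_Suc_conv_rev)
    then show "ls \<in> (\<lambda>(js,i). js @ [i]) ` (?L \<times> A)" by (auto intro!: image_eqI[of _ _ "(ys,y)"])
  qed auto
  have inj: "inj_on (\<lambda>(js,i). js @ [i]) (?L \<times> A)"
    by (auto simp: inj_on_def)
  have fin: "finite ?L"
    using finite_lists_length_eq[OF assms, of k] by (simp add: conj_commute)
  show ?thesis
    unfolding eq sum.reindex[OF inj]
    using sum.cartesian_product[of "\<lambda>js i. h (js @ [i])" A ?L] by (simp add: split_beta)
qed

lemma real_alg:
  fixes N a t I G p q r h1 h2 :: real
  assumes "N = a - 2 * t * I + t^2 * G" "p * t = q" "p * t^2 = r * (h1 * h2)"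
  shows "p * N = p * a - 2 * q * I + r * (h1 * (h2 * G))"
proof -
  have "p * N = p * (a - 2 * t * I + t^2 * G)" using assms(1) by simp
  also have "\<dots> = p * a - 2 * (p * t) * I + (p * t^2) * G" by (simp add: algebra_simps)
  finally show ?thesis using assms(2,3) by simp
qed

lemma bfix_alg:
  fixes a D g s :: real
  assumes "a > 0" "D > 0" "a^2 = 1 + g * D"
  shows "(1/a)^2 * (g * s / D) + (1/a)^2 * g^2 * s = g * s / D"
proof -
  have "(1/a)^2 * (g * s / D) + (1/a)^2 * g^2 * s = g * s * (1 + g * D) / (D * a^2)"
    using assms(1,2) by (simp add: field_simps power2_eq_square)
  also have "\<dots> = g * s * a^2 / (D * a^2)" using assms(3) by simp
  also have "\<dots> = g * s / D" using assms(1) by simp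
  finally show ?thesis .
qed

theorem mainTheorem4:
  fixes n :: nat
    and f :: "nat \<Rightarrow> 'a::euclidean_space \<Rightarrow> real"
    and grad :: "nat \<Rightarrow> 'a \<Rightarrow> 'a"
    and \<mu> p :: "nat \<Rightarrow> real"
    and xs x0 :: 'a
    and \<gamma> :: real and k :: nat
  assumes n_pos: "n \<ge> 1"
    and grad: "\<And>i x. i < n \<Longrightarrow> (f i has_derivative (\<lambda>h. inner (grad i x) h)) (at x)"
    and mu_pos: "\<And>i. i < n \<Longrightarrow> \<mu> i > 0"
    and sconv: "\<And>i. i < n \<Longrightarrow> strongly_convex_grad (\<mu> i) (f i) (grad i)"
    and xs_min: "\<And>x. (1 / real n) * (\<Sum>i<n. f i xs) \<le> (1 / real n) * (\<Sum>i<n. f i x)"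
    and p_pos: "\<And>i. i < n \<Longrightarrow> p i > 0"
    and p_sum: "(\<Sum>i<n. p i) = 1"
    and gamma_pos: "\<gamma> > 0"
  shows "let \<mu>NS = Min ((\<lambda>i. \<mu> i / (real n * p i)) ` {..<n});
             \<sigma>NS2 = (1 / real n) * (\<Sum>i<n. (1 / (real n * p i)) * (norm (grad i xs))^2)
         in sppm_ns_expected_sqdist \<gamma> n p f x0 xs k
            \<le> (1 / (1 + \<gamma> * \<mu>NS)) ^ (2*k) * (norm (x0 - xs))^2
              + \<gamma> * \<sigma>NS2 / (\<gamma> * \<mu>NS^2 + 2 * \<mu>NS)"
proof -
  define mu where "mu = Min ((\<lambda>i. \<mu> i / (real n * p i)) ` {..<n})"
  define sig where "sig = (1 / real n) * (\<Sum>i<n. (1 / (real n * p i)) * (norm (grad i xs))^2)"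
  define c where "c = (1 / (1 + \<gamma> * mu))^2"
  define B where "B = \<gamma> * sig / (\<gamma> * mu^2 + 2 * mu)"
  define T where "T = (\<lambda>i x. prox (\<gamma> / (real n * p i)) (f i) x)"
  define L where "L = (\<lambda>k. {ls. length ls = k \<and> set ls \<subseteq> {..<n}})"
  define P where "P = (\<lambda>ls. prod_list (map p ls))"
  define X where "X = (\<lambda>ls. sppm_ns_iter \<gamma> n p f x0 ls)"
  define E where "E = (\<lambda>k. \<Sum>ls\<in>L k. P ls * (norm (X ls - xs))^2)"
  define S where "S = (\<lambda>k. \<Sum>ls\<in>L k. P ls)"
  have npos: "real n > 0" using n_pos by simp
  have ne: "(\<lambda>i. \<mu> i / (real n * p i)) ` {..<n} \<noteq> {}"
  proof -
    have "0 \<in> {..<n}" using n_pos by simp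
    then show ?thesis by blast
  qed
  have mu_le: "mu \<le> \<mu> i / (real n * p i)" if "i < n" for i
    unfolding mu_def using that by (intro Min_le) auto
  have mupos: "mu > 0"
  proof -
    have "mu \<in> (\<lambda>i. \<mu> i / (real n * p i)) ` {..<n}" unfolding mu_def by (rule Min_in) (use ne in auto)
    then obtain i where "i < n" "mu = \<mu> i / (real n * p i)" by auto
    then show ?thesis using mu_pos p_pos npos by simp
  qed
  have gpos: "1 + \<gamma> * mu > 0" using gamma_pos mupos by (smt (verit) mult_pos_pos)
  have c_nonneg: "c \<ge> 0" unfolding c_def by simp
  have gsum: "(\<Sum>i<n. grad i xs) = 0"
  proof -
    have d: "((\<lambda>x. \<Sum>i<n. f i x) has_derivative (\<lambda>h. \<Sum>i<n. inner (grad i xs) h)) (at xs)"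
      by (intro has_derivative_sum) (use grad in auto)
    have mn: "(\<Sum>i<n. f i xs) \<le> (\<Sum>i<n. f i x)" for x
      using xs_min[of x] npos by (simp add: divide_right_mono_neg divide_le_cancel)
    have "(\<lambda>h. \<Sum>i<n. inner (grad i xs) h) = (\<lambda>h. 0)"
      by (rule has_derivative_local_min[OF d]) (use mn in \<open>simp add: always_eventually\<close>)
    then have "(\<Sum>i<n. inner (grad i xs) (\<Sum>i<n. grad i xs)) = 0" by metis
    then have "inner (\<Sum>i<n. grad i xs) (\<Sum>i<n. grad i xs) = 0" by (simp add: inner_sum_left)
    then show ?thesis by simp
  qed
  have step: "(\<Sum>i<n. p i * (norm (T i x - xs))^2) \<le> c * ((norm (x - xs))^2 + \<gamma>^2 * sig)" for x
  proof -
    define t where "t = (\<lambda>i. \<gamma> / (real n * p i))"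
    have each: "(norm (T i x - xs))^2 \<le> c * (norm (x - xs - t i *\<^sub>R grad i xs))^2" if i: "i < n" for i
    proof -
      have tp: "t i > 0" unfolding t_def using gamma_pos p_pos[OF i] npos by simp
      have dd: "\<And>x. (f i has_derivative (\<lambda>h. inner (grad i x) h)) (at x)" using grad i by blast
      have "(norm (T i x - xs))^2 \<le> (norm (x - xs - t i *\<^sub>R grad i xs))^2 / (1 + t i * \<mu> i)^2"
        unfolding T_def t_def by (rule prox_contract[OF dd sconv[OF i] mu_pos[OF i]]) (use tp t_def in simp)
      moreover have "1 + \<gamma> * mu \<le> 1 + t i * \<mu> i"
      proof -
        have "\<gamma> * mu \<le> \<gamma> * (\<mu> i / (real n * p i))" using mu_le[OF i] gamma_pos by (intro mult_left_mono) auto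
        then show ?thesis unfolding t_def by (simp add: mult.commute)
      qed
      then have "1 / (1 + t i * \<mu> i)^2 \<le> c" unfolding c_def using gpos
        by (simp add: power_divide frac_le power_mono)
      then have "(norm (x - xs - t i *\<^sub>R grad i xs))^2 / (1 + t i * \<mu> i)^2 \<le> c * (norm (x - xs - t i *\<^sub>R grad i xs))^2"
        by (metis (no_types, lifting) divide_real_def mult.commute mult_right_mono mult_1 zero_le_power2)
      ultimately show ?thesis by linarith
    qed
    have "(\<Sum>i<n. p i * (norm (T i x - xs))^2) \<le> (\<Sum>i<n. p i * (c * (norm (x - xs - t i *\<^sub>R grad i xs))^2))"
      by (intro sum_mono mult_left_mono each) (use p_pos in \<open>auto simp: less_imp_le\<close>)
    also have "\<dots> = c * (\<Sum>i<n. p i * (norm (x - xs - t i *\<^sub>R grad i xs))^2)"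
      by (simp add: sum_distrib_left algebra_simps)
    also have "(\<Sum>i<n. p i * (norm (x - xs - t i *\<^sub>R grad i xs))^2) = (norm (x - xs))^2 + \<gamma>^2 * sig"
    proof -
      have ex: "p i * (norm (x - xs - t i *\<^sub>R grad i xs))^2
          = p i * (norm (x - xs))^2 - 2 * (\<gamma> / real n) * inner (x - xs) (grad i xs)
            + \<gamma>^2 * ((1 / real n) * ((1 / (real n * p i)) * (norm (grad i xs))^2))" if i: "i < n" for i
      proof -
        have "(norm (x - xs - t i *\<^sub>R grad i xs))^2 = (norm (x - xs))^2 - 2 * t i * inner (x - xs) (grad i xs) + (t i)^2 * (norm (grad i xs))^2"
        proof -
          have nd: "norm (v - w)^2 = norm v^2 - 2 * inner v w + norm w^2" for v w :: 'a
            by (simp add: power2_norm_eq_inner inner_diff_left inner_diff_right inner_commute)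
          show ?thesis using nd[of "x - xs" "t i *\<^sub>R grad i xs"]
            by (simp add: power_mult_distrib)
        qed
        moreover have "p i * t i = \<gamma> / real n" unfolding t_def using p_pos[OF i] npos by simp
        moreover have "p i * (t i)^2 = \<gamma>^2 * ((1 / real n) * (1 / (real n * p i)))"
          unfolding t_def using p_pos[OF i] npos by (simp add: field_simps power2_eq_square)
        ultimately show ?thesis by (rule real_alg)
      qed
      have "(\<Sum>i<n. p i * (norm (x - xs - t i *\<^sub>R grad i xs))^2)
         = (\<Sum>i<n. p i * (norm (x - xs))^2) - (\<Sum>i<n. 2 * (\<gamma> / real n) * inner (x - xs) (grad i xs))
            + (\<Sum>i<n. \<gamma>^2 * ((1 / real n) * ((1 / (real n * p i)) * (norm (grad i xs))^2)))"
        by (simp add: ex sum.distrib sum_subtractf)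
      also have "(\<Sum>i<n. p i * (norm (x - xs))^2) = (norm (x - xs))^2"
        using p_sum by (simp add: sum_distrib_right[symmetric])
      also have "(\<Sum>i<n. 2 * (\<gamma> / real n) * inner (x - xs) (grad i xs)) = 0"
      proof -
        have "(\<Sum>i<n. 2 * (\<gamma> / real n) * inner (x - xs) (grad i xs)) = 2 * (\<gamma> / real n) * inner (x - xs) (\<Sum>i<n. grad i xs)"
          by (simp add: sum_distrib_left inner_sum_right)
        then show ?thesis by (simp add: gsum)
      qed
      also have "(\<Sum>i<n. \<gamma>^2 * ((1 / real n) * ((1 / (real n * p i)) * (norm (grad i xs))^2))) = \<gamma>^2 * sig"
        unfolding sig_def by (simp add: sum_distrib_left)
      finally show ?thesis by simp
    qed
    finally show ?thesis .
  qed
  have finL: "finite (L k)" for k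
    using finite_lists_length_eq[of "{..<n}" k] unfolding L_def by (simp add: conj_commute)
  have Pnn: "P ls \<ge> 0" if "ls \<in> L k" for ls k
  proof -
    have "set ls \<subseteq> {..<n}" using that unfolding L_def by simp
    then show ?thesis unfolding P_def
    proof (induction ls)
      case (Cons a ls)
      then have "p a \<ge> 0" using p_pos[of a] by simp
      then show ?case using Cons by simp
    qed simp
  qed
  have dec: "(\<Sum>ls\<in>L (Suc k). h ls) = (\<Sum>js\<in>L k. \<Sum>i<n. h (js @ [i]))" for h :: "nat list \<Rightarrow> real" and k
    unfolding L_def by (rule sum_lists_Suc) simp
  have L0: "L 0 = {[]}" unfolding L_def by auto
  have S1: "S k = 1" for k
  proof (induction k)
    case 0 then show ?case by (simp add: S_def L0 P_def)
  next
    case (Suc k)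
    have "S (Suc k) = (\<Sum>js\<in>L k. P js * (\<Sum>i<n. p i))"
      unfolding S_def dec by (simp add: P_def sum_distrib_left)
    then show ?case using Suc p_sum by (simp add: S_def)
  qed
  have Xapp: "X (js @ [i]) = T i (X js)" for js i
    by (simp add: X_def T_def sppm_ns_iter_def)
  have Erec: "E (Suc k) \<le> c * E k + c * \<gamma>^2 * sig" for k
  proof -
    have "E (Suc k) = (\<Sum>js\<in>L k. P js * (\<Sum>i<n. p i * (norm (T i (X js) - xs))^2))"
      unfolding E_def dec by (simp add: Xapp P_def sum_distrib_left mult.assoc)
    also have "\<dots> \<le> (\<Sum>js\<in>L k. P js * (c * ((norm (X js - xs))^2 + \<gamma>^2 * sig)))"
      by (intro sum_mono mult_left_mono step Pnn)
    also have "\<dots> = c * E k + c * \<gamma>^2 * sig * S k"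
    proof -
      have "(\<Sum>js\<in>L k. P js * (c * ((norm (X js - xs))^2 + \<gamma>^2 * sig)))
          = (\<Sum>js\<in>L k. c * (P js * (norm (X js - xs))^2) + (c * \<gamma>^2 * sig) * P js)"
        by (rule sum.cong) (simp_all add: algebra_simps)
      also have "\<dots> = c * E k + (c * \<gamma>^2 * sig) * S k"
        unfolding E_def S_def by (simp add: sum.distrib sum_distrib_left)
      finally show ?thesis .
    qed
    finally show ?thesis using S1 by simp
  qed
  have Bfix: "c * B + c * \<gamma>^2 * sig = B"
  proof -
    have D: "\<gamma> * mu^2 + 2 * mu > 0" using gamma_pos mupos by (simp add: add_pos_pos)
    have a2: "(1 + \<gamma> * mu)^2 = 1 + \<gamma> * (\<gamma> * mu^2 + 2 * mu)" by (simp add: power2_eq_square algebra_simps)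
    show ?thesis unfolding c_def B_def by (rule bfix_alg[OF gpos D a2])
  qed
  have B_nn: "B \<ge> 0"
  proof -
    have "sig \<ge> 0" unfolding sig_def using npos p_pos
      by (intro mult_nonneg_nonneg sum_nonneg) (auto intro!: mult_nonneg_nonneg less_imp_le)
    moreover have "\<gamma> * mu^2 + 2 * mu > 0" using gamma_pos mupos by (simp add: add_pos_pos)
    ultimately show ?thesis unfolding B_def using gamma_pos by simp
  qed
  have main: "E k \<le> c^k * (norm (x0 - xs))^2 + B" for k
  proof (induction k)
    case 0 then show ?case
      unfolding E_def using B_nn by (simp add: L0 P_def X_def sppm_ns_iter_def)
  next
    case (Suc k)
    have "E (Suc k) \<le> c * E k + c * \<gamma>^2 * sig" by (rule Erec)
    also have "\<dots> \<le> c * (c^k * (norm (x0 - xs))^2 + B) + c * \<gamma>^2 * sig"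
      using Suc c_nonneg by (simp add: mult_left_mono)
    also have "\<dots> = c^(Suc k) * (norm (x0 - xs))^2 + B" using Bfix by (simp add: algebra_simps)
    finally show ?case .
  qed
  have "(1 / (1 + \<gamma> * mu)) ^ (2*k) = c^k" unfolding c_def by (simp add: power_mult)
  moreover have "sppm_ns_expected_sqdist \<gamma> n p f x0 xs k = E k"
    unfolding sppm_ns_expected_sqdist_def E_def L_def P_def X_def ..
  ultimately show ?thesis using main[of k] unfolding Let_def mu_def[symmetric] sig_def[symmetric] B_def
    by simp
qed

end
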